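(* Let $p,q,p',q'\in\mathbb R^3$ satisfy $p^0+q^0=p'^0+q'^0$ and $p+q=p'+q'$. Then $$\nu_{\mathfrak c}(p)\lesssim\nu_{\mathfrak c}(p')\,\nu_{\mathfrak c}(q'),\qquad \nu_{\mathfrak c}(q)\lesssim\nu_{\mathfrak c}(p')\,\nu_{\mathfrak c}(q'),$$ where the implicit constant is independent of $\mathfrak c$ and of $(t,x)$.
   Context: $\mathfrak c\ge1$ is the speed of light, $p^0=\sqrt{\mathfrak c^2+|p|^2}$. $K_j$ are modified Bessel functions of the second kind. Let $(n,u,T)(t,x)$ be smooth with $c_0\le n\le c_0^{-1}$, $c_0\le T\le c_0^{-1}$, $|u|\le c_0^{-1}$ for a constant $c_0\in(0,1)$ independent of $\mathfrak c$; $u^0=\sqrt{\mathfrak c^2+|u|^2}$, $\gamma=\mathfrak c^2/T$, and $\mathbf M_{\mathfrak c}(t,x,p)=\frac{n\gamma}{4\pi\mathfrak c^3K_2(\gamma)}\exp\{(-u^0p^0+u\cdot p)/T\}$. For $p,q\in\mathbb R^3$ let $\mathfrak s=2(p^0q^0-p\cdot q+\mathfrak c^2)$, $g=\sqrt{2(p^0q^0-p\cdot q-\mathfrak c^2)}$ and $v_\phi(p,q)=\frac{\mathfrak c}4\frac{g\sqrt{\mathfrak s}}{p^0q^0}$. The collision frequency is $\nu_{\mathfrak c}(p)=\nu_{\mathfrak c}(t,x,p)=\int_{\mathbb R^3}\int_{\mathbb S^2}v_\phi(p,q)\mathbf M_{\mathfrak c}(t,x,q)\,d\omega\,dq$. 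*)

theory Defs
  imports "HOL-Analysis.Analysis"
begin

definition besselK :: "nat \<Rightarrow> real \<Rightarrow> real" where
  "besselK j z = (LBINT t:{0..}. exp (- z * cosh t) * cosh (real j * t))"

definition pzero :: "real \<Rightarrow> real^3 \<Rightarrow> real" where
  "pzero c p = sqrt (c\<^sup>2 + (norm p)\<^sup>2)"

definition maxwellian :: "real \<Rightarrow> real \<Rightarrow> real^3 \<Rightarrow> real \<Rightarrow> real^3 \<Rightarrow> real" where
  "maxwellian c n u T q =
     (let \<gamma> = c\<^sup>2 / T in
      n * \<gamma> / (4 * pi * c ^ 3 * besselK 2 \<gamma>)
        * exp ((- pzero c u * pzero c q + u \<bullet> q) / T))"

definition s_var :: "real \<Rightarrow> real^3 \<Rightarrow> real^3 \<Rightarrow> real" where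
  "s_var c p q = 2 * (pzero c p * pzero c q - p \<bullet> q + c\<^sup>2)"

definition g_var :: "real \<Rightarrow> real^3 \<Rightarrow> real^3 \<Rightarrow> real" where
  "g_var c p q = sqrt (2 * (pzero c p * pzero c q - p \<bullet> q - c\<^sup>2))"

definition v_phi :: "real \<Rightarrow> real^3 \<Rightarrow> real^3 \<Rightarrow> real" where
  "v_phi c p q = c / 4 * (g_var c p q * sqrt (s_var c p q)) / (pzero c p * pzero c q)"

text \<open>Collision frequency nu_c(p) = int_{R^3} int_{S^2} v_phi(p,q) M_c(q) d\<omega> dq.
  The integrand does not depend on \<omega>, so the inner integral over the unit
  sphere S^2 (surface measure, total mass 4 pi) equals 4 pi times the integrand.\<close>
definition nu :: "real \<Rightarrow> real \<Rightarrow> real^3 \<Rightarrow> real \<Rightarrow> real^3 \<Rightarrow> real" where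
  "nu c n u T p = (\<integral>q. 4 * pi * v_phi c p q * maxwellian c n u T q \<partial>lborel)"

end

theory Submission
  imports Defs "HOL-Real_Asymp.Real_Asymp"
begin


lemma nn_exp_half:
  assumes k: "0 < k"
  shows "(\<integral>\<^sup>+t. ennreal (exp (-k*t)) * indicator {0..} t \<partial>lborel) = ennreal (1/k)"
proof -
  have "(\<integral>\<^sup>+t. ennreal (exp (-k*t)) * indicator {0..} t \<partial>lborel) = 0 - (- exp (-k*0)/k)"
  proof (rule nn_integral_FTC_atLeast)
    show "(\<lambda>t. exp (-k*t)) \<in> borel_measurable borel" by measurable
    fix x :: real
    show "DERIV (\<lambda>t. - exp (-k*t)/k) x :> exp (-k*x)"
      using k by (auto intro!: derivative_eq_intros simp: field_simps)
    show "0 \<le> exp (-k*x)" by simp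
  next
    show "((\<lambda>t. - exp (-k*t)/k) \<longlongrightarrow> 0) at_top" using k by real_asymp
  qed
  then show ?thesis by simp
qed

lemma nn_exp_abs:
  assumes k: "0 < k"
  shows "(\<integral>\<^sup>+t. ennreal (exp (-k*\<bar>t\<bar>)) \<partial>lborel) < \<infinity>"
proof -
  let ?g = "\<lambda>t::real. ennreal (exp (-k*t)) * indicator {0..} t"
  have "(\<integral>\<^sup>+t. ennreal (exp (-k*\<bar>t\<bar>)) \<partial>lborel) \<le> (\<integral>\<^sup>+t. ?g t + ?g (-t) \<partial>lborel)"
  proof (intro nn_integral_mono)
    fix t :: real
    show "ennreal (exp (-k*\<bar>t\<bar>)) \<le> ?g t + ?g (-t)"
    proof (cases "0 \<le> t")
      case True
      then show ?thesis by (simp add: indicator_def)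
    next
      case False
      then show ?thesis by (simp add: indicator_def)
    qed
  qed
  also have "\<dots> = (\<integral>\<^sup>+t. ?g t \<partial>lborel) + (\<integral>\<^sup>+t. ?g (-t) \<partial>lborel)"
    by (intro nn_integral_add) auto
  also have "(\<integral>\<^sup>+t. ?g (-t) \<partial>lborel) = (\<integral>\<^sup>+t. ?g t \<partial>(distr lborel borel uminus))"
    by (subst nn_integral_distr) auto
  also have "\<dots> = (\<integral>\<^sup>+t. ?g t \<partial>lborel)" by (simp add: lborel_distr_uminus)
  also have "(\<integral>\<^sup>+t. ?g t \<partial>lborel) = ennreal (1/k)" using nn_exp_half[OF k] .
  finally have "(\<integral>\<^sup>+t. ennreal (exp (-k*\<bar>t\<bar>)) \<partial>lborel) \<le> ennreal (1/k) + ennreal (1/k)" .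
  also have "\<dots> < \<infinity>" by (simp add: ennreal_plus[symmetric] del: ennreal_plus)
  finally show ?thesis .
qed

lemma integrable_exp_norm:
  assumes k: "0 < k"
  shows "integrable lborel (\<lambda>x::'a::euclidean_space. exp (-k * norm x))"
proof -
  define d where "d = real DIM('a)"
  have d: "0 < d" by (simp add: d_def)
  let ?f = "\<lambda>b::'a. \<lambda>t::real. ennreal (exp (-(k/d)*\<bar>t\<bar>))"
  have le: "exp (-k * norm x) \<le> (\<Prod>b\<in>Basis. exp (-(k/d)*\<bar>x \<bullet> b\<bar>))" for x :: 'a
  proof -
    have "(\<Sum>b\<in>(Basis::'a set). \<bar>x \<bullet> b\<bar>) \<le> (\<Sum>b\<in>(Basis::'a set). norm x)"
      by (intro sum_mono Basis_le_norm)
    also have "\<dots> = d * norm x" by (simp add: d_def)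
    finally have "(k/d) * (\<Sum>b\<in>(Basis::'a set). \<bar>x \<bullet> b\<bar>) \<le> k * norm x"
      using k d by (simp add: field_simps)
    then have "exp (-k * norm x) \<le> exp (- ((k/d) * (\<Sum>b\<in>(Basis::'a set). \<bar>x \<bullet> b\<bar>)))" by simp
    also have "\<dots> = (\<Prod>b\<in>Basis. exp (-(k/d)*\<bar>x \<bullet> b\<bar>))"
      by (simp add: sum_distrib_left exp_sum[symmetric] sum_negf)
    finally show ?thesis .
  qed
  have "(\<integral>\<^sup>+x. ennreal (\<Prod>b\<in>Basis. exp (-(k/d)*\<bar>x \<bullet> b\<bar>)) \<partial>(lborel::'a measure))
      = (\<integral>\<^sup>+x. (\<Prod>b\<in>Basis. ?f b (x \<bullet> b)) \<partial>lborel)"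
    by (simp add: prod_ennreal)
  also have "\<dots> = (\<Prod>b\<in>Basis. (\<integral>\<^sup>+t. ?f b t \<partial>lborel))"
    by (rule nn_integral_lborel_prod) auto
  also have "\<dots> < \<infinity>"
    using nn_exp_abs[of "k/d"] k d by (simp add: power_less_top_ennreal)
  finally have fin: "(\<integral>\<^sup>+x. ennreal (\<Prod>b\<in>Basis. exp (-(k/d)*\<bar>x \<bullet> b\<bar>)) \<partial>(lborel::'a measure)) < \<infinity>" .
  have int: "integrable lborel (\<lambda>x::'a. \<Prod>b\<in>Basis. exp (-(k/d)*\<bar>x \<bullet> b\<bar>))"
    by (rule integrableI_bounded) (use fin in \<open>auto simp: abs_prod\<close>)
  show ?thesis
    by (rule Bochner_Integration.integrable_bound[OF int]) (use le in \<open>auto simp: abs_prod\<close>)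
qed



lemma sinh_meas[measurable]: "(sinh :: real \<Rightarrow> real) \<in> borel_measurable borel"
  by (intro borel_measurable_continuous_onI continuous_intros)
lemma cosh_meas[measurable]: "(cosh :: real \<Rightarrow> real) \<in> borel_measurable borel"
  by (intro borel_measurable_continuous_onI continuous_intros)

lemma sinh_ge_self: "0 \<le> (t::real) \<Longrightarrow> t \<le> sinh t"
proof -
  assume t: "0 \<le> t"
  have "(\<lambda>x. sinh x - x) 0 \<le> (\<lambda>x. sinh x - x) t"
  proof (rule DERIV_nonneg_imp_nondecreasing[OF t])
    fix x :: real
    show "\<exists>y. ((\<lambda>x. sinh x - x) has_real_derivative y) (at x) \<and> 0 \<le> y"
      by (intro exI[of _ "cosh x - 1"]) (auto intro!: derivative_eq_intros simp: cosh_real_ge_1)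
  qed
  then show ?thesis by simp
qed

lemma cosh_le_sq: assumes "0 \<le> (t::real)" "t \<le> 1" shows "cosh t \<le> 1 + t\<^sup>2"
proof -
  have e1: "exp t \<le> 1 + t + t\<^sup>2" by (rule exp_bound[OF assms])
  have "exp (-t) * (1 + t) \<le> exp (-t) * exp t"
    by (rule mult_left_mono) (simp_all add: exp_ge_add_one_self)
  also have "\<dots> = 1" by (simp add: exp_minus)
  also have "1 \<le> (1 - t + t\<^sup>2) * (1 + t)"
  proof -
    have "(1 - t + t\<^sup>2) * (1 + t) = 1 + t^3" by (simp add: algebra_simps power2_eq_square power3_eq_cube)
    then show ?thesis using assms by simp
  qed
  finally have "exp (-t) * (1 + t) \<le> (1 - t + t\<^sup>2) * (1 + t)" .
  then have e2: "exp (-t) \<le> 1 - t + t\<^sup>2" using assms by (simp add: mult_le_cancel_right)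
  show ?thesis using e1 e2 by (simp add: cosh_def)
qed

definition Kf :: "real \<Rightarrow> real \<Rightarrow> real" where
  "Kf g t = exp (- g * cosh t) * cosh (real 2 * t)"

lemma besselK_Kf: "besselK 2 g = (\<integral>t. indicator {0..} t * Kf g t \<partial>lborel)"
  by (simp add: besselK_def Kf_def set_lebesgue_integral_def)

lemma Kf_pw_upper:
  assumes c0: "0 < c0" and g: "c0 \<le> g" and t: "0 \<le> t"
  shows "Kf g t \<le> exp (-g) * (2*(1+4/c0)\<^sup>2) * exp (-g*(cosh t - 1)/2)"
proof -
  define w where "w = cosh t"
  have w1: "1 \<le> w" by (simp add: w_def cosh_real_ge_1)
  have gp: "0 < g" using c0 g by linarith
  define x where "x = g*(w-1)/4"
  have x0: "0 \<le> x" using w1 gp by (simp add: x_def)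
  have "w = 1 + 4*x/g" using gp by (simp add: x_def field_simps)
  also have "\<dots> \<le> 1 + 4*x/c0" using x0 c0 g by (intro add_left_mono divide_left_mono) auto
  also have "\<dots> \<le> (1+4/c0)*(1+x)" using x0 c0 by (simp add: field_simps)
  also have "\<dots> \<le> (1+4/c0)*exp x" using c0 by (intro mult_left_mono) (auto simp: exp_ge_add_one_self add_nonneg_nonneg)
  finally have "w \<le> (1+4/c0)*exp x" .
  then have "w\<^sup>2 \<le> ((1+4/c0)*exp x)\<^sup>2" using w1 by (intro power_mono) auto
  also have "\<dots> = (1+4/c0)\<^sup>2 * exp (g*(w-1)/2)"
    by (simp add: power_mult_distrib x_def power2_eq_square exp_add[symmetric])
  finally have wsq: "w\<^sup>2 \<le> (1+4/c0)\<^sup>2 * exp (g*(w-1)/2)" .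
  have c2: "cosh (real 2 * t) \<le> 2 * w\<^sup>2"
    using cosh_double[of t] cosh_square_eq[of t] by (simp add: w_def)
  have "Kf g t = exp (-g*w) * cosh (real 2 * t)" by (simp add: Kf_def w_def)
  also have "\<dots> \<le> exp (-g*w) * (2 * ((1+4/c0)\<^sup>2 * exp (g*(w-1)/2)))"
    using c2 wsq by (intro mult_left_mono) auto
  also have "\<dots> = (2*(1+4/c0)\<^sup>2) * (exp (-g*w) * exp (g*(w-1)/2))" by simp
  also have "exp (-g*w) * exp (g*(w-1)/2) = exp (-g) * exp (-g*(w - 1)/2)"
  proof -
    have "-g*w + g*(w-1)/2 = -g + (-g*(w-1)/2)" by (simp add: field_simps)
    then show ?thesis by (simp only: exp_add[symmetric])
  qed
  finally show ?thesis by (simp add: w_def mult_ac)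
qed

lemma nn_sinh_part:
  assumes gp: "0 < g"
  shows "(\<integral>\<^sup>+t. ennreal (sqrt g * sinh t * exp (-g*(cosh t - 1)/2)) * indicator {0..} t \<partial>lborel)
         = ennreal (2 / sqrt g)"
proof -
  have "(\<integral>\<^sup>+t. ennreal (sqrt g * sinh t * exp (-g*(cosh t - 1)/2)) * indicator {0..} t \<partial>lborel)
        = 0 - (-(2/sqrt g) * exp (-g*(cosh 0 - 1)/2))"
  proof (rule nn_integral_FTC_atLeast)
    show "(\<lambda>t. sqrt g * sinh t * exp (-g*(cosh t - 1)/2)) \<in> borel_measurable borel" by measurable
    fix x :: real
    show "DERIV (\<lambda>t. -(2/sqrt g) * exp (-g*(cosh t - 1)/2)) x :> sqrt g * sinh x * exp (-g*(cosh x - 1)/2)"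
      using gp by (auto intro!: derivative_eq_intros simp: field_simps real_sqrt_mult[symmetric])
    assume "0 \<le> x"
    then show "0 \<le> sqrt g * sinh x * exp (-g*(cosh x - 1)/2)" using gp by simp
  next
    show "((\<lambda>t. -(2/sqrt g) * exp (-g*(cosh t - 1)/2)) \<longlongrightarrow> 0) at_top" using gp by real_asymp
  qed
  then show ?thesis by simp
qed

lemma K2_upper:
  assumes c0: "0 < c0" and g: "c0 \<le> g"
  shows "besselK 2 g \<le> exp (-g) * (2*(1+4/c0)\<^sup>2) * (3 / sqrt g)"
proof -
  have gp: "0 < g" using c0 g by linarith
  define C where "C = exp (-g) * (2*(1+4/c0)\<^sup>2)"
  have C0: "0 \<le> C" by (simp add: C_def)
  define h1 where "h1 = (\<lambda>t::real. sqrt g * sinh t * exp (-g*(cosh t - 1)/2) * indicator {0..} t)"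
  define h where "h = (\<lambda>t. C * (indicator {0..1/sqrt g} t + h1 t))"
  have nn1: "(\<integral>\<^sup>+t. ennreal (h1 t) \<partial>lborel) = ennreal (2/sqrt g)"
    unfolding nn_sinh_part[OF gp, symmetric] h1_def
    by (intro nn_integral_cong) (simp split: split_indicator)
  have hb1: "has_bochner_integral lborel h1 (2/sqrt g)"
    by (rule has_bochner_integral_nn_integral[OF _ _ _ nn1]) (use gp in \<open>auto simp: h1_def indicator_def\<close>)
  have hb2: "has_bochner_integral lborel (indicator {0..1/sqrt g}) (1/sqrt g)"
  proof -
    have "integrable lborel (indicator {0..1/sqrt g} :: real \<Rightarrow> real)"
      by (rule integrable_real_indicator) (auto simp: emeasure_lborel_Icc_eq)
    moreover have "integral\<^sup>L lborel (indicator {0..1/sqrt g} :: real \<Rightarrow> real) = 1/sqrt g"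
      using gp by (simp add: measure_def emeasure_lborel_Icc_eq)
    ultimately show ?thesis by (simp add: has_bochner_integral_iff)
  qed
  have hb: "has_bochner_integral lborel h (C * (1/sqrt g + 2/sqrt g))"
    unfolding h_def by (intro has_bochner_integral_mult_right has_bochner_integral_add hb1 hb2)
  have "besselK 2 g = (\<integral>t. indicator {0..} t * Kf g t \<partial>lborel)" by (rule besselK_Kf)
  also have "\<dots> \<le> integral\<^sup>L lborel h"
  proof (rule integral_mono')
    show "integrable lborel h" using hb by (simp add: has_bochner_integral_iff)
    fix t :: real
    show "0 \<le> h t" using gp C0 by (auto simp: h_def h1_def indicator_def intro!: mult_nonneg_nonneg)
    show "indicator {0..} t * Kf g t \<le> h t"
    proof (cases "0 \<le> t")
      case False
      then show ?thesis using gp C0 by (auto simp: h_def h1_def indicator_def)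
    next
      case t: True
      let ?e = "exp (-g*(cosh t - 1)/2)"
      have "?e \<le> indicator {0..1/sqrt g} t + sqrt g * sinh t * ?e"
      proof (cases "t \<le> 1/sqrt g")
        case True
        have "?e \<le> 1" using gp cosh_real_ge_1[of t] by simp
        moreover have "0 \<le> sqrt g * sinh t * ?e" using t gp by simp
        moreover have "indicator {0..1/sqrt g} t = (1::real)" using True t by (simp add: indicator_def)
        ultimately show ?thesis by linarith
      next
        case False
        then have "1 < sqrt g * t" using gp by (simp add: field_simps)
        also have "\<dots> \<le> sqrt g * sinh t" using sinh_ge_self[OF t] gp by (simp add: mult_left_mono)
        finally have "?e \<le> sqrt g * sinh t * ?e" by simp
        moreover have "0 \<le> (indicator {0..1/sqrt g} t :: real)" by simp
        ultimately show ?thesis by linarith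
      qed
      then have "C * ?e \<le> h t" using t C0 by (simp add: h_def h1_def mult_left_mono)
      moreover have "Kf g t \<le> C * ?e" using Kf_pw_upper[OF c0 g t] by (simp add: C_def)
      ultimately show ?thesis using t by simp
    qed
  qed
  also have "\<dots> = C * (3 / sqrt g)" using hb by (simp add: has_bochner_integral_iff)
  finally show ?thesis by (simp add: C_def)
qed

lemma K2_lower:
  assumes c0: "0 < c0" "c0 < 1" and g: "c0 \<le> g"
    and int: "integrable lborel (\<lambda>t. indicator {0..} t * Kf g t)"
  shows "sqrt c0 / sqrt g * exp (-g-1) \<le> besselK 2 g"
proof -
  have gp: "0 < g" using c0 g by linarith
  define t0 where "t0 = min 1 (1 / sqrt g)"
  have t00: "0 < t0" using gp by (simp add: t0_def)
  have t0ge: "sqrt c0 / sqrt g \<le> t0"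
  proof (cases "1 \<le> 1/sqrt g")
    case True
    then have "t0 = 1" by (simp add: t0_def)
    have "sqrt c0 \<le> sqrt g" using g by simp
    then show ?thesis using \<open>t0 = 1\<close> gp by simp
  next
    case False
    have "sqrt c0 \<le> sqrt g" using g by simp
    then show ?thesis using False gp c0 by (simp add: t0_def field_simps)
  qed
  have "(\<integral>t. indicator {0..t0} t * exp (-g-1) \<partial>lborel) \<le> (\<integral>t. indicator {0..} t * Kf g t \<partial>lborel)"
  proof (rule integral_mono[OF _ int])
    show "integrable lborel (\<lambda>t. indicator {0..t0} t * exp (-g-1) :: real)"
      by (intro integrable_mult_left integrable_real_indicator) (auto simp: emeasure_lborel_Icc_eq)
    fix t :: real
    show "indicator {0..t0} t * exp (-g-1) \<le> indicator {0..} t * Kf g t"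
    proof (cases "t \<in> {0..t0}")
      case False
      then show ?thesis by (auto simp: indicator_def Kf_def intro!: mult_nonneg_nonneg)
    next
      case True
      then have t: "0 \<le> t" "t \<le> 1" "t \<le> 1/sqrt g" by (auto simp: t0_def)
      have "cosh t \<le> 1 + t\<^sup>2" using cosh_le_sq t by blast
      have "t\<^sup>2 \<le> (1/sqrt g)\<^sup>2" using t by (intro power_mono) auto
      then have "g * t\<^sup>2 \<le> 1" using gp by (simp add: field_simps power_divide)
      have "g * cosh t \<le> g * (1 + t\<^sup>2)" using \<open>cosh t \<le> 1 + t\<^sup>2\<close> gp by (intro mult_left_mono) auto
      then have "g * cosh t \<le> g + 1" using \<open>g * t\<^sup>2 \<le> 1\<close> by (simp add: distrib_left)
      then have "exp (-g-1) \<le> exp (-g * cosh t)" by simp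
      also have "\<dots> \<le> Kf g t" unfolding Kf_def
        using cosh_real_ge_1[of "real 2 * t"] by (simp add: mult_le_cancel_left1)
      finally show ?thesis using True by simp
    qed
  qed
  moreover have "(\<integral>t. indicator {0..t0} t * exp (-g-1) \<partial>lborel) = t0 * exp (-g-1)"
    using t00 by (simp add: measure_def emeasure_lborel_Icc_eq)
  ultimately have "t0 * exp (-g-1) \<le> besselK 2 g" by (simp add: besselK_Kf)
  moreover have "sqrt c0 / sqrt g * exp (-g-1) \<le> t0 * exp (-g-1)"
    using mult_right_mono[OF t0ge exp_ge_zero] by simp
  ultimately show ?thesis by linarith
qed



lemma sq_sqrt': "0 \<le> x \<Longrightarrow> sqrt x * sqrt x = (x::real)" by simp

lemma alg_base:
  fixes c a b i :: real
  assumes c: "0 < c" and a: "0 \<le> a" and b: "0 \<le> b" and i: "\<bar>i\<bar> \<le> a*b"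
  defines "P \<equiv> sqrt (c\<^sup>2 + a\<^sup>2)" and "Q \<equiv> sqrt (c\<^sup>2 + b\<^sup>2)"
  shows "c\<^sup>2 + a*b \<le> P*Q" and "P*Q \<le> c\<^sup>2 + (a\<^sup>2+b\<^sup>2)/2"
    and "0 \<le> P*Q - i - c\<^sup>2" and "P*Q - i - c\<^sup>2 \<le> (a+b)\<^sup>2/2"
    and "c\<^sup>2*(a-b)\<^sup>2/(2*(P*Q)) \<le> P*Q - i - c\<^sup>2"
proof -
  have P2: "P*P = c\<^sup>2 + a\<^sup>2" unfolding P_def by (simp add: add_nonneg_nonneg)
  have Q2: "Q*Q = c\<^sup>2 + b\<^sup>2" unfolding Q_def by (simp add: add_nonneg_nonneg)
  have P0: "0 < P" unfolding P_def using c by (simp add: add_pos_nonneg)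
  have Q0: "0 < Q" unfolding Q_def using c by (simp add: add_pos_nonneg)
  have PQ1: "(P*Q)*(P*Q) = (c\<^sup>2 + a\<^sup>2)*(c\<^sup>2 + b\<^sup>2)"
  proof -
    have "(P*Q)*(P*Q) = (P*P)*(Q*Q)" by (simp add: algebra_simps)
    also have "\<dots> = (c\<^sup>2 + a\<^sup>2)*(c\<^sup>2 + b\<^sup>2)" using P2 Q2 by simp
    finally show ?thesis .
  qed
  have PQ2: "(P*Q)*(P*Q) = (c\<^sup>2 + a*b)*(c\<^sup>2 + a*b) + c\<^sup>2*(a-b)\<^sup>2"
  proof -
    have "(P*Q)*(P*Q) = (c\<^sup>2 + a\<^sup>2)*(c\<^sup>2 + b\<^sup>2)" by (rule PQ1)
    also have "\<dots> = (c\<^sup>2 + a*b)*(c\<^sup>2 + a*b) + c\<^sup>2*(a-b)\<^sup>2" by (simp add: algebra_simps power2_eq_square)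
    finally show ?thesis .
  qed
  have pos1: "0 \<le> c\<^sup>2 + a*b" using a b by simp
  have pos2: "0 < c\<^sup>2 + a*b" using a b c by (simp add: add_pos_nonneg)
  show h1: "c\<^sup>2 + a*b \<le> P*Q"
  proof (rule ccontr)
    assume "\<not> ?thesis"
    then have "P*Q < c\<^sup>2 + a*b" by simp
    then have "(P*Q)*(P*Q) < (c\<^sup>2 + a*b)*(c\<^sup>2 + a*b)"
      using P0 Q0 pos2 by (intro mult_strict_mono) auto
    moreover have "0 \<le> c\<^sup>2*(a-b)\<^sup>2" by simp
    ultimately show False using PQ2 by linarith
  qed
  have "(P*Q)*(P*Q) \<le> (c\<^sup>2 + (a\<^sup>2+b\<^sup>2)/2)*(c\<^sup>2 + (a\<^sup>2+b\<^sup>2)/2)"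
  proof -
    have "(c\<^sup>2 + (a\<^sup>2+b\<^sup>2)/2)*(c\<^sup>2 + (a\<^sup>2+b\<^sup>2)/2) - (P*Q)*(P*Q) = (a\<^sup>2-b\<^sup>2)\<^sup>2/4"
      unfolding PQ1 by (simp add: field_simps power2_eq_square)
    moreover have "0 \<le> (a\<^sup>2-b\<^sup>2)\<^sup>2/4" by simp
    ultimately show ?thesis by linarith
  qed
  then have "(P*Q)\<^sup>2 \<le> (c\<^sup>2 + (a\<^sup>2+b\<^sup>2)/2)\<^sup>2" by (simp only: power2_eq_square)
  moreover have "0 \<le> c\<^sup>2 + (a\<^sup>2+b\<^sup>2)/2" by simp
  ultimately show h2: "P*Q \<le> c\<^sup>2 + (a\<^sup>2+b\<^sup>2)/2" by (rule power2_le_imp_le)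
  show "0 \<le> P*Q - i - c\<^sup>2" using h1 i by linarith
  have "(a+b)\<^sup>2/2 = (a\<^sup>2+b\<^sup>2)/2 + a*b" by (simp add: power2_eq_square algebra_simps)
  then show "P*Q - i - c\<^sup>2 \<le> (a+b)\<^sup>2/2" using h2 i by linarith
  have id: "(P*Q - (c\<^sup>2 + a*b)) * (P*Q + (c\<^sup>2 + a*b)) = c\<^sup>2*(a-b)\<^sup>2"
  proof -
    have "(P*Q - (c\<^sup>2 + a*b)) * (P*Q + (c\<^sup>2 + a*b)) = (P*Q)*(P*Q) - (c\<^sup>2 + a*b)*(c\<^sup>2 + a*b)"
      by (simp add: algebra_simps)
    then show ?thesis using PQ2 by linarith
  qed
  have den: "0 < P*Q + (c\<^sup>2 + a*b)" using P0 Q0 pos1 by (simp add: add_pos_nonneg)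
  have "P*Q - (c\<^sup>2 + a*b) = c\<^sup>2*(a-b)\<^sup>2 / (P*Q + (c\<^sup>2 + a*b))"
    using id den by (simp add: field_simps)
  also have "\<dots> \<ge> c\<^sup>2*(a-b)\<^sup>2/(2*(P*Q))"
    using h1 den pos1 by (intro divide_left_mono) (auto intro: mult_pos_pos)
  finally show "c\<^sup>2*(a-b)\<^sup>2/(2*(P*Q)) \<le> P*Q - i - c\<^sup>2" using i by linarith
qed



lemma case2_alg:
  fixes c R X V d m :: real
  assumes c: "1 \<le> c" and R: "0 < R" and Rm: "R \<le> 12*c*m" and X: "0 \<le> X"
    and XR: "c\<^sup>2*d\<^sup>2 \<le> 2*X*R" and md: "m \<le> 4*d" and m: "0 \<le> m" and V: "0 \<le> V"
    and eq: "V\<^sup>2*(16*R\<^sup>2) = c\<^sup>2*(2*X)*(2*X+4*c\<^sup>2)"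
  shows "c/9216 \<le> V"
proof -
  have "(2*c*X)\<^sup>2 \<le> (4*R*V)\<^sup>2"
  proof -
    have "(2*c*X)\<^sup>2 = c\<^sup>2*(2*X)*(2*X)" by (simp add: power2_eq_square)
    also have "\<dots> \<le> c\<^sup>2*(2*X)*(2*X+4*c\<^sup>2)" by (rule mult_left_mono) (use X in auto)
    also have "\<dots> = V\<^sup>2*(16*R\<^sup>2)" using eq by simp
    also have "\<dots> = (4*R*V)\<^sup>2" by (simp add: power_mult_distrib)
    finally show ?thesis .
  qed
  then have h1: "2*c*X \<le> 4*R*V" by (rule power2_le_imp_le) (use R V in auto)
  have "c*(c\<^sup>2*d\<^sup>2) \<le> c*(2*X*R)" by (rule mult_left_mono) (use XR c in auto)
  also have "\<dots> = R*(2*c*X)" by (simp add: algebra_simps)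
  also have "\<dots> \<le> R*(4*R*V)" by (rule mult_left_mono) (use h1 R in auto)
  finally have h2: "c^3*d\<^sup>2 \<le> 4*R\<^sup>2*V" by (simp add: power2_eq_square power3_eq_cube algebra_simps)
  have "m\<^sup>2 \<le> (4*d)\<^sup>2" by (rule power_mono) (use md m in auto)
  have "R\<^sup>2 \<le> (12*c*m)\<^sup>2" by (rule power_mono) (use Rm R in auto)
  have "4*R\<^sup>2*(c/9216) \<le> 4*(12*c*m)\<^sup>2*(c/9216)" by (rule mult_right_mono, rule mult_left_mono) (use \<open>R\<^sup>2 \<le> (12*c*m)\<^sup>2\<close> c in auto)
  also have "\<dots> = c^3 * (m\<^sup>2/16)" by (simp add: power2_eq_square power3_eq_cube)
  also have "\<dots> \<le> c^3 * d\<^sup>2" by (rule mult_left_mono) (use \<open>m\<^sup>2 \<le> (4*d)\<^sup>2\<close> c in \<open>auto simp: power2_eq_square\<close>)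
  also have "\<dots> \<le> 4*R\<^sup>2*V" by (rule h2)
  finally have "4*R\<^sup>2*(c/9216) \<le> 4*R\<^sup>2*V" .
  then show ?thesis using R by (simp add: mult_le_cancel_left_pos)
qed

lemma case1_alg:
  fixes c R X V d m :: real
  assumes c: "1 \<le> c" and R: "0 < R" and Rc: "R \<le> 12*c\<^sup>2" and X: "0 \<le> X"
    and XR: "c\<^sup>2*d\<^sup>2 \<le> 2*X*R" and md: "m \<le> 4*d" and m: "0 \<le> m" and V: "0 \<le> V"
    and eq: "V\<^sup>2*(16*R\<^sup>2) = c\<^sup>2*(2*X)*(2*X+4*c\<^sup>2)"
  shows "m/9216 \<le> V"
proof -
  have h1: "8*c^4*X \<le> (4*R*V)\<^sup>2"
  proof -
    have "8*c^4*X = c\<^sup>2*(2*X)*(4*c\<^sup>2)" by (simp add: power2_eq_square power4_eq_xxxx)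
    also have "\<dots> \<le> c\<^sup>2*(2*X)*(2*X+4*c\<^sup>2)" by (rule mult_left_mono) (use X in auto)
    also have "\<dots> = V\<^sup>2*(16*R\<^sup>2)" using eq by simp
    also have "\<dots> = (4*R*V)\<^sup>2" by (simp add: power_mult_distrib)
    finally show ?thesis .
  qed
  have "4*c^4*(c\<^sup>2*d\<^sup>2) \<le> 4*c^4*(2*X*R)" by (rule mult_left_mono) (use XR in auto)
  also have "\<dots> = R*(8*c^4*X)" by (simp add: algebra_simps)
  also have "\<dots> \<le> R*(4*R*V)\<^sup>2" by (rule mult_left_mono) (use h1 R in auto)
  finally have h2: "4*c^6*d\<^sup>2 \<le> R*(4*R*V)\<^sup>2" by (simp add: power2_eq_square algebra_simps power_add[symmetric] numeral_eq_Suc)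
  have "m\<^sup>2 \<le> (4*d)\<^sup>2" by (rule power_mono) (use md m in auto)
  have R3: "R^3 \<le> (12*c\<^sup>2)^3" by (rule power_mono) (use Rc R in auto)
  have "R*(4*R*(m/9216))\<^sup>2 = R^3 * (16*m\<^sup>2/9216\<^sup>2)" by (simp add: power2_eq_square power3_eq_cube)
  also have "\<dots> \<le> (12*c\<^sup>2)^3 * (16*m\<^sup>2/9216\<^sup>2)" by (rule mult_right_mono) (use R3 in auto)
  also have "\<dots> \<le> 4*c^6*(m\<^sup>2/16)" using c by (simp add: power2_eq_square power3_eq_cube algebra_simps power_add[symmetric] numeral_eq_Suc)
  also have "\<dots> \<le> 4*c^6*d\<^sup>2" by (rule mult_left_mono) (use \<open>m\<^sup>2 \<le> (4*d)\<^sup>2\<close> in \<open>auto simp: power2_eq_square\<close>)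
  also have "\<dots> \<le> R*(4*R*V)\<^sup>2" by (rule h2)
  finally have "(4*R*(m/9216))\<^sup>2 \<le> (4*R*V)\<^sup>2" using R by (simp add: mult_le_cancel_left_pos)
  then have "4*R*(m/9216) \<le> 4*R*V" by (rule power2_le_imp_le) (use R V in auto)
  then show ?thesis using R by (simp add: mult_le_cancel_left_pos)
qed


lemma pz_facts:
  assumes c: "0 < c"
  shows "0 < pzero c p" "c \<le> pzero c p" "norm p \<le> pzero c p" "pzero c p \<le> c + norm p"
    "pzero c p * pzero c p = c\<^sup>2 + (norm p)\<^sup>2"
proof -
  show "0 < pzero c p" using c by (simp add: pzero_def add_pos_nonneg)
  show "c \<le> pzero c p" unfolding pzero_def using c by (intro real_le_rsqrt) auto
  show "norm p \<le> pzero c p" unfolding pzero_def by (intro real_le_rsqrt) auto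
  show "pzero c p \<le> c + norm p" unfolding pzero_def using c
    by (intro real_le_lsqrt) (auto simp: power2_eq_square algebra_simps)
  show "pzero c p * pzero c p = c\<^sup>2 + (norm p)\<^sup>2" by (simp add: pzero_def add_nonneg_nonneg)
qed

lemma alg_vec:
  fixes p q :: "real^3"
  assumes c: "0 < c"
  defines "X \<equiv> pzero c p * pzero c q - p \<bullet> q - c\<^sup>2"
  shows "c\<^sup>2 + norm p * norm q \<le> pzero c p * pzero c q"
    and "pzero c p * pzero c q \<le> c\<^sup>2 + ((norm p)\<^sup>2 + (norm q)\<^sup>2)/2"
    and "0 \<le> X" and "X \<le> (norm p + norm q)\<^sup>2/2"
    and "c\<^sup>2*(norm p - norm q)\<^sup>2/(2*(pzero c p * pzero c q)) \<le> X"
  using alg_base[OF c norm_ge_zero norm_ge_zero, of "p \<bullet> q" p q]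
  by (auto simp: pzero_def X_def Cauchy_Schwarz_ineq2)

lemma v_sq:
  fixes p q :: "real^3"
  assumes c: "0 < c"
  defines "X \<equiv> pzero c p * pzero c q - p \<bullet> q - c\<^sup>2" and "R \<equiv> pzero c p * pzero c q"
  shows "0 \<le> v_phi c p q" and "(v_phi c p q)\<^sup>2*(16*R\<^sup>2) = c\<^sup>2*(2*X)*(2*X+4*c\<^sup>2)"
proof -
  have X0: "0 \<le> X" using alg_vec(3)[OF c] by (simp add: X_def)
  have R0: "0 < R" using pz_facts(1)[OF c] by (simp add: R_def)
  have s: "s_var c p q = 2*X+4*c\<^sup>2" by (simp add: s_var_def X_def algebra_simps)
  have g: "g_var c p q = sqrt (2*X)" by (simp add: g_var_def X_def)
  have v: "v_phi c p q = c/4 * (sqrt (2*X) * sqrt (2*X+4*c\<^sup>2)) / R"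
    by (simp add: v_phi_def s g R_def)
  show "0 \<le> v_phi c p q" unfolding v using c R0 X0 by simp
  have "(v_phi c p q * (4*R))\<^sup>2 = c\<^sup>2*(2*X)*(2*X+4*c\<^sup>2)"
    unfolding v using R0 X0 c by (simp add: power_mult_distrib real_sqrt_mult[symmetric] add_nonneg_nonneg)
  then show "(v_phi c p q)\<^sup>2*(16*R\<^sup>2) = c\<^sup>2*(2*X)*(2*X+4*c\<^sup>2)"
    by (simp add: power_mult_distrib)
qed

lemma v_le_c:
  assumes c: "0 < c"
  shows "v_phi c p q \<le> c"
proof -
  define X where "X = pzero c p * pzero c q - p \<bullet> q - c\<^sup>2"
  define R where "R = pzero c p * pzero c q"
  have X0: "0 \<le> X" using alg_vec(3)[OF c] by (simp add: X_def)
  have R0: "0 < R" using pz_facts(1)[OF c] by (simp add: R_def)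
  have h1: "c\<^sup>2 + norm p * norm q \<le> R" using alg_vec(1)[OF c] by (simp add: R_def)
  have pq: "- (p \<bullet> q) \<le> norm p * norm q" using Cauchy_Schwarz_ineq2[of p q] by linarith
  have XR: "X = R - p \<bullet> q - c\<^sup>2" by (simp add: X_def R_def)
  have nn: "0 \<le> norm p * norm q" by simp
  have "0 \<le> c\<^sup>2" by simp
  then have "2*X + 2*c\<^sup>2 \<le> 4*R" using h1 pq XR nn by linarith
  have c4: "0 \<le> c*(c*(c*c))" using c by simp
  have "(2*X)*(2*X+4*c\<^sup>2) \<le> (2*X + 2*c\<^sup>2)\<^sup>2" using c4 by (simp add: power2_eq_square algebra_simps)
  also have "\<dots> \<le> (4*R)\<^sup>2" by (rule power_mono) (use \<open>2*X + 2*c\<^sup>2 \<le> 4*R\<close> X0 in auto)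
  finally have i1: "(2*X)*(2*X+4*c\<^sup>2) \<le> (4*R)\<^sup>2" .
  have "(v_phi c p q)\<^sup>2*(16*R\<^sup>2) = c\<^sup>2*(2*X)*(2*X+4*c\<^sup>2)"
    using v_sq(2)[OF c, of p q] unfolding X_def R_def .
  also have "\<dots> = c\<^sup>2*((2*X)*(2*X+4*c\<^sup>2))" by (simp only: mult.assoc)
  also have "\<dots> \<le> c\<^sup>2*(4*R)\<^sup>2" by (rule mult_left_mono) (use i1 in auto)
  also have "\<dots> = c\<^sup>2*(16*R\<^sup>2)" by (simp add: power_mult_distrib)
  finally have "(v_phi c p q)\<^sup>2*(16*R\<^sup>2) \<le> c\<^sup>2*(16*R\<^sup>2)" .
  then have "(v_phi c p q)\<^sup>2 \<le> c\<^sup>2" using R0 by (simp add: mult_le_cancel_right_pos)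
  then show ?thesis by (rule power2_le_imp_le) (use c in auto)
qed

lemma v_le_lin:
  assumes c: "0 < c"
  shows "v_phi c p q \<le> (norm p + norm q)/2"
proof -
  define X where "X = pzero c p * pzero c q - p \<bullet> q - c\<^sup>2"
  define R where "R = pzero c p * pzero c q"
  have X0: "0 \<le> X" using alg_vec(3)[OF c] by (simp add: X_def)
  have R0: "0 < R" using pz_facts(1)[OF c] by (simp add: R_def)
  have h1: "c\<^sup>2 + norm p * norm q \<le> R" using alg_vec(1)[OF c] by (simp add: R_def)
  have Xu: "2*X \<le> (norm p + norm q)\<^sup>2" using alg_vec(4)[OF c, of p q] by (simp add: X_def)
  have pq: "- (p \<bullet> q) \<le> norm p * norm q" using Cauchy_Schwarz_ineq2[of p q] by linarith
  have XR: "X = R - p \<bullet> q - c\<^sup>2" by (simp add: X_def R_def)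
  have nn: "0 \<le> norm p * norm q" by simp
  have s4: "2*X + 4*c\<^sup>2 \<le> 4*R" using h1 pq XR nn by linarith
  have cR: "c\<^sup>2 \<le> R" using h1 nn by linarith
  have "(v_phi c p q)\<^sup>2*(16*R\<^sup>2) = c\<^sup>2*(2*X)*(2*X+4*c\<^sup>2)"
    using v_sq(2)[OF c, of p q] unfolding X_def R_def .
  also have "\<dots> \<le> (R*(norm p + norm q)\<^sup>2)*(4*R)"
    using cR Xu s4 X0 R0 by (intro mult_mono) (auto intro: add_nonneg_nonneg)
  also have "\<dots> = ((norm p + norm q)/2)\<^sup>2*(16*R\<^sup>2)"
    by (simp add: power2_eq_square field_simps)
  finally have "(v_phi c p q)\<^sup>2*(16*R\<^sup>2) \<le> ((norm p + norm q)/2)\<^sup>2*(16*R\<^sup>2)" .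
  then have "(v_phi c p q)\<^sup>2 \<le> ((norm p + norm q)/2)\<^sup>2" using R0 by (simp add: mult_le_cancel_right_pos)
  then show ?thesis by (rule power2_le_imp_le) auto
qed

lemma v_lower:
  assumes c: "1 \<le> c" and q5: "norm q \<le> 5" and d: "(1 + norm p)/4 \<le> \<bar>norm p - norm q\<bar>"
  shows "min c (1 + norm p) / 9216 \<le> v_phi c p q"
proof -
  have c0: "0 < c" using c by linarith
  define X where "X = pzero c p * pzero c q - p \<bullet> q - c\<^sup>2"
  define R where "R = pzero c p * pzero c q"
  define dd where "dd = \<bar>norm p - norm q\<bar>"
  have X0: "0 \<le> X" using alg_vec(3)[OF c0] by (simp add: X_def)
  have R0: "0 < R" using pz_facts(1)[OF c0] by (simp add: R_def)
  have "c\<^sup>2*dd\<^sup>2/(2*R) \<le> X" using alg_vec(5)[OF c0, of p q] by (simp add: X_def R_def dd_def)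
  then have XR: "c\<^sup>2*dd\<^sup>2 \<le> 2*X*R" using R0 by (simp add: field_simps)
  have eq: "(v_phi c p q)\<^sup>2*(16*R\<^sup>2) = c\<^sup>2*(2*X)*(2*X+4*c\<^sup>2)" using v_sq(2)[OF c0] by (simp add: X_def R_def)
  have V0: "0 \<le> v_phi c p q" using v_sq(1)[OF c0] .
  have P: "pzero c p \<le> c + norm p" "0 \<le> pzero c p" using pz_facts[OF c0, of p] by auto
  have Q: "pzero c q \<le> 6*c" using pz_facts(4)[OF c0, of q] q5 c by linarith
  have Q0: "0 \<le> pzero c q" using pz_facts[OF c0, of q] by auto
  have md: "1 + norm p \<le> 4*dd" using d by (simp add: dd_def)
  show ?thesis
  proof (cases "1 + norm p \<le> c")
    case True
    have "R \<le> (2*c)*(6*c)" unfolding R_def using P Q Q0 True by (intro mult_mono) auto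
    then have "R \<le> 12*c\<^sup>2" by (simp add: power2_eq_square)
    from case1_alg[OF c R0 this X0 XR md _ V0 eq] True show ?thesis by simp
  next
    case False
    have "R \<le> (2*(1+norm p))*(6*c)" unfolding R_def using P Q Q0 False by (intro mult_mono) auto
    then have "R \<le> 12*c*(1+norm p)" by (simp add: algebra_simps)
    from case2_alg[OF c R0 this X0 XR md _ V0 eq] False show ?thesis by simp
  qed
qed



definition Ast :: "real \<Rightarrow> real \<Rightarrow> real \<Rightarrow> real" where
  "Ast c n T = n * (c\<^sup>2/T) / (4 * pi * c ^ 3 * besselK 2 (c\<^sup>2/T)) * exp (-(c\<^sup>2/T))"

definition Es :: "real \<Rightarrow> real^3 \<Rightarrow> real \<Rightarrow> real^3 \<Rightarrow> real" where
  "Es c u T q = exp (-(pzero c u * pzero c q - u \<bullet> q - c\<^sup>2)/T)"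

lemma maxwellian_eq: "maxwellian c n u T q = Ast c n T * Es c u T q"
proof -
  have "exp ((- pzero c u * pzero c q + u \<bullet> q) / T) = exp (-(c\<^sup>2/T)) * exp (-(pzero c u * pzero c q - u \<bullet> q - c\<^sup>2)/T)"
  proof -
    have "(- pzero c u * pzero c q + u \<bullet> q) / T = -(c\<^sup>2/T) + (-(pzero c u * pzero c q - u \<bullet> q - c\<^sup>2)/T)"
      by (cases "T = 0") (simp_all add: field_simps)
    then show ?thesis by (metis exp_add)
  qed
  then show ?thesis by (simp add: maxwellian_def Ast_def Es_def Let_def)
qed

lemma D_lower_alg:
  fixes c a r K U Q D :: real
  assumes c: "1 \<le> c" and a: "0 \<le> a" "a \<le> K" and r: "0 \<le> r" and U: "0 < U" "U \<le> c*(1+K)"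
    and Q: "0 < Q" "Q \<le> c + r" and D: "c\<^sup>2*(a-r)\<^sup>2/(2*(U*Q)) \<le> D" and D0: "0 \<le> D"
  shows "(r - 1 - 2*K)/(8*(1+K)) \<le> D"
proof (cases "2*a \<le> r")
  case False
  then have "r - 1 - 2*K < 0" using a by linarith
  moreover have "0 < 8*(1+K)" using a by (simp add: add_pos_nonneg)
  ultimately have "(r - 1 - 2*K)/(8*(1+K)) < 0" by (simp add: divide_neg_pos)
  then show ?thesis using D0 by linarith
next
  case True
  have K0: "0 \<le> K" using a by linarith
  have rr: "r\<^sup>2/4 \<le> (a-r)\<^sup>2"
  proof -
    have "r/2 \<le> r - a" using True by linarith
    then have "(r/2)\<^sup>2 \<le> (r-a)\<^sup>2" by (rule power_mono) (use r in simp)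
    then show ?thesis by (simp add: power2_eq_square algebra_simps)
  qed
  have UQ: "U*Q \<le> (c*(1+K))*(c+r)" by (rule mult_mono) (use U Q c K0 r in auto)
  have UQ0: "0 < U*Q" using U Q by simp
  have "c\<^sup>2*(r\<^sup>2/4)/(2*((c*(1+K))*(c+r))) \<le> c\<^sup>2*(a-r)\<^sup>2/(2*(U*Q))"
  proof (rule frac_le)
    show "0 \<le> c\<^sup>2*(a-r)\<^sup>2" by simp
    show "c\<^sup>2*(r\<^sup>2/4) \<le> c\<^sup>2*(a-r)\<^sup>2" by (rule mult_left_mono) (use rr in auto)
    show "0 < 2*(U*Q)" using UQ0 by simp
    show "2*(U*Q) \<le> 2*((c*(1+K))*(c+r))" using UQ by simp
  qed
  also have "\<dots> \<le> D" by (rule D)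
  finally have h: "c\<^sup>2*(r\<^sup>2/4)/(2*((c*(1+K))*(c+r))) \<le> D" .
  have nz: "c \<noteq> 0" "c + r \<noteq> 0" "1 + K \<noteq> 0" using c K0 r by auto
  have eq: "c\<^sup>2*(r\<^sup>2/4)/(2*((c*(1+K))*(c+r))) = (c*r\<^sup>2)/((c+r)*(8*(1+K)))"
  proof -
    have d1: "2*((c*(1+K))*(c+r)) \<noteq> 0" using nz by simp
    have d2: "(c+r)*(8*(1+K)) \<noteq> 0" using nz by simp
    show ?thesis by (subst frac_eq_eq[OF d1 d2]) (simp add: algebra_simps power2_eq_square)
  qed
  have key: "(r-1)*(c+r) \<le> c*r\<^sup>2"
  proof -
    have "c*r\<^sup>2 - (r-1)*(c+r) = (c-1)*(r\<^sup>2-r+1) + 1" by (simp add: algebra_simps power2_eq_square)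
    moreover have "0 \<le> (c-1)*(r\<^sup>2-r+1)"
    proof (rule mult_nonneg_nonneg)
      show "0 \<le> c - 1" using c by simp
      have "0 \<le> (r - 1/2)\<^sup>2" by simp
      then show "0 \<le> r\<^sup>2-r+1" by (simp add: power2_eq_square algebra_simps)
    qed
    ultimately show ?thesis by linarith
  qed
  have "(r - 1)/(8*(1+K)) = ((c+r)*(r-1))/((c+r)*(8*(1+K)))"
    by (rule mult_divide_mult_cancel_left[OF nz(2), symmetric])
  also have "\<dots> = ((r-1)*(c+r))/((c+r)*(8*(1+K)))" by (simp only: mult.commute)
  also have "\<dots> \<le> (c*r\<^sup>2)/((c+r)*(8*(1+K)))"
    by (rule divide_right_mono[OF key]) (use c r K0 in simp)
  finally have "(r - 1)/(8*(1+K)) \<le> D" using h eq by linarith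
  moreover have "(r - 1 - 2*K)/(8*(1+K)) \<le> (r - 1)/(8*(1+K))"
    by (rule divide_right_mono) (use K0 in auto)
  ultimately show ?thesis by linarith
qed

lemma Es_upper:
  assumes c: "1 \<le> c" and T: "0 < T" and u: "norm u \<le> K"
  shows "Es c u T q \<le> exp ((1+2*K)/(8*(1+K)*T)) * exp (- norm q/(8*(1+K)*T))"
proof -
  have c0: "0 < c" using c by simp
  define D where "D = pzero c u * pzero c q - u \<bullet> q - c\<^sup>2"
  have K0: "0 \<le> K" using u norm_ge_zero order_trans by blast
  have "(norm q - 1 - 2*K)/(8*(1+K)) \<le> D"
  proof (rule D_lower_alg[OF c norm_ge_zero u norm_ge_zero])
    show "0 < pzero c u" "0 < pzero c q" using pz_facts(1)[OF c0] by auto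
    have "K*1 \<le> K*c" by (rule mult_left_mono) (use K0 c in auto)
    then show "pzero c u \<le> c*(1+K)" using pz_facts(4)[OF c0, of u] u by (simp add: algebra_simps)
    show "pzero c q \<le> c + norm q" using pz_facts(4)[OF c0] .
    show "c\<^sup>2*(norm u - norm q)\<^sup>2/(2*(pzero c u * pzero c q)) \<le> D"
      using alg_vec(5)[OF c0, of u q] by (simp add: D_def)
    show "0 \<le> D" using alg_vec(3)[OF c0, of u q] by (simp add: D_def)
  qed
  then have "(norm q - 1 - 2*K)/(8*(1+K))/T \<le> D/T" by (rule divide_right_mono) (use T in simp)
  moreover have "(norm q - 1 - 2*K)/(8*(1+K))/T = norm q/(8*(1+K)*T) - (1+2*K)/(8*(1+K)*T)"
    by (simp add: diff_divide_distrib[symmetric])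
  moreover have "-D/T = -(D/T)" by simp
  moreover have "- norm q/(8*(1+K)*T) = -(norm q/(8*(1+K)*T))" by simp
  ultimately have "-D/T \<le> (1+2*K)/(8*(1+K)*T) + (- norm q/(8*(1+K)*T))" by linarith
  then have "Es c u T q \<le> exp ((1+2*K)/(8*(1+K)*T) + (- norm q/(8*(1+K)*T)))"
    by (simp add: Es_def D_def)
  then show ?thesis by (simp only: exp_add)
qed

lemma Es_lower:
  assumes c: "1 \<le> c" and T: "0 < T" and u: "norm u \<le> K"
  shows "exp (-(K + norm q)\<^sup>2/(2*T)) \<le> Es c u T q"
proof -
  have c0: "0 < c" using c by simp
  define D where "D = pzero c u * pzero c q - u \<bullet> q - c\<^sup>2"
  have "D \<le> (norm u + norm q)\<^sup>2/2" using alg_vec(4)[OF c0] by (simp add: D_def)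
  also have "\<dots> \<le> (K + norm q)\<^sup>2/2" using u by (simp add: power_mono divide_right_mono)
  finally have "D/T \<le> (K + norm q)\<^sup>2/2/T"
    by (rule divide_right_mono) (use T in simp)
  moreover have "(K + norm q)\<^sup>2/2/T = (K + norm q)\<^sup>2/(2*T)" by simp
  moreover have "-D/T = -(D/T)" by simp
  moreover have "-(K + norm q)\<^sup>2/(2*T) = -((K + norm q)\<^sup>2/(2*T))" by simp
  ultimately have "-(K + norm q)\<^sup>2/(2*T) \<le> -D/T" by linarith
  then show ?thesis unfolding Es_def D_def by (rule exp_mono)
qed

lemma Es_pos: "0 < Es c u T q" by (simp add: Es_def)

lemma comb_norm:
  assumes c: "0 < c" and E: "pzero c p + pzero c q = pzero c p' + pzero c q'"
  shows "norm p \<le> 2 * max (norm p') (norm q')"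
proof -
  define e where "e = (\<lambda>x. pzero c x - c)"
  have e0: "0 \<le> e x" for x using pz_facts(2)[OF c, of x] by (simp add: e_def)
  have nsq: "(norm x)\<^sup>2 = e x * (e x + 2*c)" for x
    using pz_facts(5)[OF c, of x] by (simp add: e_def algebra_simps power2_eq_square)
  have ep: "e p \<le> e p' + e q'" using E pz_facts(2)[OF c, of q] by (simp add: e_def)
  have mono: "norm x \<le> 2 * norm y" if "e x \<le> 2 * e y" for x y
  proof -
    have "(norm x)\<^sup>2 = e x * (e x + 2*c)" by (rule nsq)
    also have "\<dots> \<le> (2 * e y) * (2 * e y + 2*c)" using that e0[of x] c by (intro mult_mono) auto
    also have "\<dots> \<le> 4 * (e y * (e y + 2*c))" using e0[of y] c by (simp add: algebra_simps)
    also have "\<dots> = (2 * norm y)\<^sup>2" using nsq[of y] by (simp add: power2_eq_square)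
    finally show ?thesis by (rule power2_le_imp_le) simp
  qed
  show ?thesis
  proof (cases "e q' \<le> e p'")
    case True
    then have "norm p \<le> 2 * norm p'" using ep by (intro mono) linarith
    then show ?thesis by simp
  next
    case False
    then have "norm p \<le> 2 * norm q'" using ep by (intro mono) linarith
    then show ?thesis by simp
  qed
qed

lemma comb_m:
  assumes c: "1 \<le> c" and E: "pzero c p + pzero c q = pzero c p' + pzero c q'"
  shows "min c (1 + norm p) \<le> 2 * (min c (1 + norm p') * min c (1 + norm q'))"
proof -
  have c0: "0 < c" using c by simp
  have n: "norm p \<le> 2 * max (norm p') (norm q')" by (rule comb_norm[OF c0 E])
  have m1: "1 \<le> min c (1 + norm p')" "1 \<le> min c (1 + norm q')" using c by auto
  have "min c (1 + norm p) \<le> 2 * max (min c (1 + norm p')) (min c (1 + norm q'))"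
    using n c by (auto simp: max_def min_def)
  also have "\<dots> \<le> 2 * (min c (1 + norm p') * min c (1 + norm q'))"
  proof -
    have "max (min c (1 + norm p')) (min c (1 + norm q')) \<le> min c (1 + norm p') * min c (1 + norm q')"
    proof -
      have "min c (1 + norm p') * 1 \<le> min c (1 + norm p') * min c (1 + norm q')"
        by (rule mult_left_mono) (use m1 in auto)
      moreover have "1 * min c (1 + norm q') \<le> min c (1 + norm p') * min c (1 + norm q')"
        by (rule mult_right_mono) (use m1 in auto)
      ultimately show ?thesis by simp
    qed
    then show ?thesis by simp
  qed
  finally show ?thesis .
qed



lemma besselK_nonneg: "0 \<le> besselK 2 g"
  unfolding besselK_Kf by (rule Bochner_Integration.integral_nonneg) (auto simp: Kf_def indicator_def)

lemma nonint_zero: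
  assumes "\<not> integrable lborel (\<lambda>t. indicator {0..} t * Kf (c\<^sup>2/T) t)"
  shows "nu c n u T p = 0"
proof -
  have "besselK 2 (c\<^sup>2/T) = 0" unfolding besselK_Kf using assms by (rule not_integrable_integral_eq)
  then have "maxwellian c n u T q = 0" for q by (simp add: maxwellian_eq Ast_def)
  then show ?thesis by (simp add: nu_def)
qed

lemma sqrt_gamma: assumes "0 < T" "0 < c" shows "sqrt (c\<^sup>2/T) = c / sqrt T"
  using assms by (simp add: real_sqrt_divide)

lemma Ast_upper:
  assumes c0: "0 < c0" "c0 < 1" and c: "1 \<le> c" and n: "0 \<le> n" "n \<le> 1/c0" and T: "c0 \<le> T" "T \<le> 1/c0"
    and int: "integrable lborel (\<lambda>t. indicator {0..} t * Kf (c\<^sup>2/T) t)"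
  shows "Ast c n T \<le> exp 1 / (4*pi*c0^3)"
proof -
  define g where "g = c\<^sup>2/T"
  have Tp: "0 < T" using c0 T by linarith
  have cp: "0 < c" using c by linarith
  have gp: "0 < g" using Tp cp by (simp add: g_def)
  have cg: "c0 \<le> g"
  proof -
    have "1 \<le> c\<^sup>2" using c by (simp add: one_le_power)
    then have "1/T \<le> c\<^sup>2/T" using Tp by (intro divide_right_mono) auto
    moreover have "c0 \<le> 1/T" using T Tp c0 by (simp add: field_simps)
    ultimately show ?thesis by (simp add: g_def)
  qed
  have lo: "sqrt c0 / sqrt g * exp (-g-1) \<le> besselK 2 g" using K2_lower[OF c0 cg] int by (simp add: g_def)
  have lo0: "0 < sqrt c0 / sqrt g * exp (-g-1)" using c0 gp by simp
  have "Ast c n T = n * g * exp (-g) / (4 * pi * c^3 * besselK 2 g)" by (simp add: Ast_def g_def)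
  also have "\<dots> \<le> n * g * exp (-g) / (4 * pi * c^3 * (sqrt c0 / sqrt g * exp (-g-1)))"
  proof (rule divide_left_mono)
    show "4 * pi * c^3 * (sqrt c0 / sqrt g * exp (-g-1)) \<le> 4 * pi * c^3 * besselK 2 g"
      by (rule mult_left_mono[OF lo]) (use cp in simp)
    show "0 \<le> n * g * exp (-g)" using n gp by simp
    have "0 < besselK 2 g" using lo lo0 by linarith
    then have a: "0 < 4 * pi * c^3 * besselK 2 g" using cp by simp
    have b: "0 < 4 * pi * c^3 * (sqrt c0 / sqrt g * exp (-g-1))"
      by (rule mult_pos_pos) (use lo0 cp in simp_all)
    show "0 < 4 * pi * c^3 * besselK 2 g * (4 * pi * c^3 * (sqrt c0 / sqrt g * exp (-g-1)))"
      using a b by (rule mult_pos_pos)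
  qed
  also have "\<dots> = n * exp 1 / (4 * pi * sqrt c0 * (T * sqrt T))"
  proof -
    have sg: "sqrt g = c / sqrt T" using sqrt_gamma[OF Tp cp] by (simp add: g_def)
    have e: "exp (-g-1) = exp (-g) / exp 1" by (simp add: exp_diff)
    have "n * g * exp (-g) / (4 * pi * c^3 * (sqrt c0 / sqrt g * exp (-g-1)))
        = n * g * exp 1 * c / (4 * pi * c^3 * sqrt c0 * sqrt T)"
      unfolding sg e using Tp cp c0 by (simp add: field_simps)
    also have "\<dots> = n * exp 1 / (4 * pi * sqrt c0 * (T * sqrt T))"
      unfolding g_def using Tp cp c0 by (simp add: field_simps power2_eq_square power3_eq_cube)
    finally show ?thesis .
  qed
  also have "\<dots> \<le> (1/c0) * exp 1 / (4 * pi * sqrt c0 * (c0 * sqrt c0))"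
  proof (rule frac_le)
    show "0 \<le> (1/c0) * exp 1" using c0 by simp
    show "n * exp 1 \<le> (1/c0) * exp 1" by (rule mult_right_mono) (use n in auto)
    show "0 < 4 * pi * sqrt c0 * (c0 * sqrt c0)" using c0 by simp
    show "4 * pi * sqrt c0 * (c0 * sqrt c0) \<le> 4 * pi * sqrt c0 * (T * sqrt T)"
      using T c0 by (intro mult_left_mono mult_mono) auto
  qed
  also have "\<dots> = exp 1 / (4*pi*c0^3)" using c0 by (simp add: field_simps power3_eq_cube)
  finally show ?thesis .
qed

lemma Ast_lower:
  assumes c0: "0 < c0" "c0 < 1" and c: "1 \<le> c" and n: "c0 \<le> n" and T: "c0 \<le> T" "T \<le> 1/c0"
    and int: "integrable lborel (\<lambda>t. indicator {0..} t * Kf (c\<^sup>2/T) t)"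
  shows "c0^3 / (4*pi*(6*(1+4/c0)\<^sup>2)) \<le> Ast c n T"
proof -
  define g where "g = c\<^sup>2/T"
  define k where "k = 6*(1+4/c0)\<^sup>2"
  have "0 < 1 + 4/c0" using c0 by (simp add: add_pos_pos)
  then have k0: "0 < k" by (simp add: k_def)
  have Tp: "0 < T" using c0 T by linarith
  have cp: "0 < c" using c by linarith
  have gp: "0 < g" using Tp cp by (simp add: g_def)
  have cg: "c0 \<le> g"
  proof -
    have "1 \<le> c\<^sup>2" using c by (simp add: one_le_power)
    then have "1/T \<le> c\<^sup>2/T" using Tp by (intro divide_right_mono) auto
    moreover have "c0 \<le> 1/T" using T Tp c0 by (simp add: field_simps)
    ultimately show ?thesis by (simp add: g_def)
  qed
  have lo: "sqrt c0 / sqrt g * exp (-g-1) \<le> besselK 2 g" using K2_lower[OF c0 cg] int by (simp add: g_def)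
  have Kpos: "0 < besselK 2 g" using lo c0 gp by (smt (verit) divide_pos_pos exp_gt_zero mult_pos_pos real_sqrt_gt_zero)
  have up: "besselK 2 g \<le> exp (-g) * (2*(1+4/c0)\<^sup>2) * (3 / sqrt g)" using K2_upper[OF c0(1) cg] .
  have "c0^3 / (4*pi*k) = c0 / (4 * pi * k * ((1/c0) * (1/c0)))" using c0 by (simp add: field_simps power3_eq_cube)
  also have "\<dots> \<le> n / (4 * pi * k * (T * sqrt T))"
  proof (rule frac_le)
    show "0 \<le> n" using n c0 by linarith
    show "c0 \<le> n" by (rule n)
    show "0 < 4 * pi * k * (T * sqrt T)" using k0 Tp by simp
    have "sqrt T \<le> 1/c0"
    proof -
      have "sqrt T \<le> sqrt (1/c0)" using T by simp
      also have "\<dots> \<le> 1/c0" using c0 by (intro real_le_lsqrt) (auto simp: power2_eq_square field_simps)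
      finally show ?thesis .
    qed
    then show "4 * pi * k * (T * sqrt T) \<le> 4 * pi * k * ((1/c0) * (1/c0))"
      using T k0 Tp c0 by (intro mult_left_mono mult_mono) auto
  qed
  also have "\<dots> = n * g * exp (-g) / (4 * pi * c^3 * (exp (-g) * (2*(1+4/c0)\<^sup>2) * (3 / sqrt g)))"
  proof -
    have sg: "sqrt g = c / sqrt T" using sqrt_gamma[OF Tp cp] by (simp add: g_def)
    have k2: "2*(1+4/c0)\<^sup>2 = k/3" by (simp add: k_def)
    have "n / (4 * pi * k * (T * sqrt T)) = n * g * c / (4 * pi * k * c^3 * sqrt T)"
      unfolding g_def using Tp cp k0 by (simp add: field_simps power2_eq_square power3_eq_cube)
    also have "\<dots> = n * g * exp (-g) / (4 * pi * c^3 * (exp (-g) * (2*(1+4/c0)\<^sup>2) * (3 / sqrt g)))"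
      unfolding sg k2 using Tp cp k0 by (simp add: field_simps)
    finally show ?thesis .
  qed
  also have "\<dots> \<le> n * g * exp (-g) / (4 * pi * c^3 * besselK 2 g)"
  proof (rule divide_left_mono)
    show le: "4 * pi * c^3 * besselK 2 g \<le> 4 * pi * c^3 * (exp (-g) * (2*(1+4/c0)\<^sup>2) * (3 / sqrt g))"
      by (rule mult_left_mono[OF up]) (use cp in simp)
    show "0 \<le> n * g * exp (-g)" using n c0 gp by simp
    have a: "0 < 4 * pi * c^3 * besselK 2 g" using Kpos cp by simp
    have "0 < 4 * pi * c^3 * (exp (-g) * (2*(1+4/c0)\<^sup>2) * (3 / sqrt g))"
      using a le by linarith
    then show "0 < 4 * pi * c^3 * (exp (-g) * (2*(1+4/c0)\<^sup>2) * (3 / sqrt g)) * (4 * pi * c^3 * besselK 2 g)"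
      using a by (rule mult_pos_pos)
  qed
  also have "\<dots> = Ast c n T" by (simp add: Ast_def g_def)
  finally show ?thesis by (simp add: k_def)
qed



lemma nu_meas: "(\<lambda>q. 4 * pi * v_phi c p q * maxwellian c n u T q) \<in> borel_measurable lborel"
  unfolding v_phi_def g_var_def s_var_def pzero_def maxwellian_def Let_def by measurable

definition bb :: "real \<Rightarrow> real" where "bb c0 = c0/(8*(1+1/c0))"
definition CC1 :: "real \<Rightarrow> real" where "CC1 c0 = exp ((1+2*(1/c0))/(8*(1+1/c0)*c0))"
definition I0 :: "real \<Rightarrow> real" where "I0 c0 = integral\<^sup>L lborel (\<lambda>q::real^3. exp (- bb c0 * norm q))"
definition I1 :: "real \<Rightarrow> real" where "I1 c0 = integral\<^sup>L lborel (\<lambda>q::real^3. norm q * exp (- bb c0 * norm q))"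

lemma bb_pos: "0 < c0 \<Longrightarrow> 0 < bb c0" by (simp add: bb_def add_pos_pos)

lemma int0: "0 < c0 \<Longrightarrow> integrable lborel (\<lambda>q::real^3. exp (- bb c0 * norm q))"
  using integrable_exp_norm[of "bb c0"] bb_pos by simp

lemma int1: assumes c0: "0 < c0" shows "integrable lborel (\<lambda>q::real^3. norm q * exp (- bb c0 * norm q))"
proof -
  define b where "b = bb c0"
  have b: "0 < b" using bb_pos[OF c0] by (simp add: b_def)
  have "integrable lborel (\<lambda>q::real^3. (2/b) * exp (- (b/2) * norm q))"
    by (rule integrable_mult_right) (rule integrable_exp_norm, use b in simp)
  then show ?thesis unfolding b_def[symmetric]
  proof (rule Bochner_Integration.integrable_bound)
    show "(\<lambda>q::real^3. norm q * exp (- b * norm q)) \<in> borel_measurable lborel" by measurable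
    show "AE x in lborel. norm (norm x * exp (- b * norm x)) \<le> norm ((2/b) * exp (- (b/2) * norm (x::real^3)))"
    proof (intro AE_I2)
      fix x :: "real^3"
      have "(b/2) * norm x \<le> exp ((b/2) * norm x)" using exp_ge_add_one_self[of "(b/2) * norm x"] by linarith
      then have "norm x \<le> (2/b) * exp ((b/2) * norm x)" using b by (simp add: field_simps)
      then have "norm x * exp (- b * norm x) \<le> (2/b) * exp ((b/2) * norm x) * exp (- b * norm x)"
        by (rule mult_right_mono) simp
      also have "\<dots> = (2/b) * exp (- (b/2) * norm x)"
        by (simp add: mult.assoc exp_add[symmetric])
      finally show "norm (norm x * exp (- b * norm x)) \<le> norm ((2/b) * exp (- (b/2) * norm x))"
        using b by simp
    qed
  qed
qed

lemma Es_upper2: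
  assumes c0: "0 < c0" and c: "1 \<le> c" and T: "c0 \<le> T" "T \<le> 1/c0" and u: "norm u \<le> 1/c0"
  shows "Es c u T q \<le> CC1 c0 * exp (- bb c0 * norm q)"
proof -
  define K where "K = 1/c0"
  have K0: "0 < K" using c0 by (simp add: K_def)
  have Tp: "0 < T" using c0 T by linarith
  have "Es c u T q \<le> exp ((1+2*K)/(8*(1+K)*T)) * exp (- norm q/(8*(1+K)*T))"
    using Es_upper[OF c Tp, of u K] u by (simp add: K_def)
  also have "\<dots> \<le> CC1 c0 * exp (- bb c0 * norm q)"
  proof (rule mult_mono)
    have "(1+2*K)/(8*(1+K)*T) \<le> (1+2*K)/(8*(1+K)*c0)"
      by (rule divide_left_mono) (use K0 T c0 in \<open>auto intro!: mult_pos_pos\<close>)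
    then show "exp ((1+2*K)/(8*(1+K)*T)) \<le> CC1 c0" by (simp add: CC1_def K_def)
    have "c0 \<le> 1/T" using T Tp c0 by (simp add: field_simps)
    then have "c0 * norm q \<le> (1/T) * norm q" by (rule mult_right_mono) simp
    then have "c0 * norm q / (8*(1+K)) \<le> (1/T) * norm q / (8*(1+K))"
      by (rule divide_right_mono) (use K0 in simp)
    then have "- (norm q/(8*(1+K)*T)) \<le> - (bb c0 * norm q)"
      by (simp add: bb_def K_def field_simps)
    then show "exp (- norm q/(8*(1+K)*T)) \<le> exp (- bb c0 * norm q)" by simp
  qed (auto simp: CC1_def)
  finally show ?thesis .
qed



lemma Ast_nonneg: assumes "0 \<le> n" "0 < T" "0 \<le> c" shows "0 \<le> Ast c n T"
  using assms besselK_nonneg[of "c\<^sup>2/T"] by (simp add: Ast_def)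

lemma f_eq: "4 * pi * v_phi c p q * maxwellian c n u T q = 4 * pi * (v_phi c p q * (Ast c n T * Es c u T q))"
  by (simp add: maxwellian_eq)

lemma f_le_h0:
  assumes c0: "0 < c0" and c: "1 \<le> c" and n: "0 \<le> n" and T: "c0 \<le> T" "T \<le> 1/c0" and u: "norm u \<le> 1/c0"
  shows "4 * pi * v_phi c p q * maxwellian c n u T q \<le> (4*pi*c*Ast c n T*CC1 c0) * exp (- bb c0 * norm q)"
    and "4 * pi * v_phi c p q * maxwellian c n u T q \<le> (4*pi*Ast c n T*CC1 c0) * ((norm p/2) * exp (- bb c0 * norm q) + (1/2) * (norm q * exp (- bb c0 * norm q)))"
    and "0 \<le> 4 * pi * v_phi c p q * maxwellian c n u T q"
proof -
  have cp: "0 < c" using c by linarith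
  have Tp: "0 < T" using c0 T by linarith
  have A0: "0 \<le> Ast c n T" using Ast_nonneg[OF n Tp] cp by simp
  have E: "Es c u T q \<le> CC1 c0 * exp (- bb c0 * norm q)" by (rule Es_upper2[OF c0 c T u])
  have E0: "0 \<le> Es c u T q" using Es_pos[of c u T q] by simp
  have v0: "0 \<le> v_phi c p q" by (rule v_sq(1)[OF cp])
  have "v_phi c p q * Es c u T q \<le> c * (CC1 c0 * exp (- bb c0 * norm q))"
    by (rule mult_mono[OF v_le_c[OF cp] E]) (use cp E0 in auto)
  then have "(4 * pi * Ast c n T) * (v_phi c p q * Es c u T q) \<le> (4 * pi * Ast c n T) * (c * (CC1 c0 * exp (- bb c0 * norm q)))"
    by (rule mult_left_mono) (use A0 in simp)
  then show "4 * pi * v_phi c p q * maxwellian c n u T q \<le> (4*pi*c*Ast c n T*CC1 c0) * exp (- bb c0 * norm q)"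
    unfolding f_eq by (simp add: ac_simps)
  have "v_phi c p q * Es c u T q \<le> ((norm p + norm q)/2) * (CC1 c0 * exp (- bb c0 * norm q))"
    by (rule mult_mono[OF v_le_lin[OF cp] E]) (use E0 in auto)
  then have "(4 * pi * Ast c n T) * (v_phi c p q * Es c u T q) \<le> (4 * pi * Ast c n T) * (((norm p + norm q)/2) * (CC1 c0 * exp (- bb c0 * norm q)))"
    by (rule mult_left_mono) (use A0 in simp)
  then show "4 * pi * v_phi c p q * maxwellian c n u T q \<le> (4*pi*Ast c n T*CC1 c0) * ((norm p/2) * exp (- bb c0 * norm q) + (1/2) * (norm q * exp (- bb c0 * norm q)))"
    unfolding f_eq by (simp add: algebra_simps add_divide_distrib)
  show "0 \<le> 4 * pi * v_phi c p q * maxwellian c n u T q"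
    unfolding f_eq using A0 E0 v0 by simp
qed

lemma nu_integrable:
  assumes c0: "0 < c0" and c: "1 \<le> c" and n: "0 \<le> n" and T: "c0 \<le> T" "T \<le> 1/c0" and u: "norm u \<le> 1/c0"
  shows "integrable lborel (\<lambda>q. 4 * pi * v_phi c p q * maxwellian c n u T q)"
proof (rule Bochner_Integration.integrable_bound)
  show "integrable lborel (\<lambda>q::real^3. (4*pi*c*Ast c n T*CC1 c0) * exp (- bb c0 * norm q))"
    by (rule integrable_mult_right) (rule int0[OF c0])
  show "(\<lambda>q. 4 * pi * v_phi c p q * maxwellian c n u T q) \<in> borel_measurable lborel" by (rule nu_meas)
  show "AE x in lborel. norm (4 * pi * v_phi c p x * maxwellian c n u T x) \<le> norm ((4*pi*c*Ast c n T*CC1 c0) * exp (- bb c0 * norm x))"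
  proof (intro AE_I2)
    fix x
    have a: "4 * pi * v_phi c p x * maxwellian c n u T x \<le> (4*pi*c*Ast c n T*CC1 c0) * exp (- bb c0 * norm x)"
      and b: "0 \<le> 4 * pi * v_phi c p x * maxwellian c n u T x" using f_le_h0[OF c0 c n T u] by auto
    have cp: "0 < c" using c by linarith
    have Tp: "0 < T" using c0 T by linarith
    have "0 \<le> Ast c n T" using Ast_nonneg[OF n Tp] cp by simp
    then have h0: "0 \<le> (4*pi*c*Ast c n T*CC1 c0) * exp (- bb c0 * norm x)" using cp by (simp add: CC1_def)
    show "norm (4 * pi * v_phi c p x * maxwellian c n u T x) \<le> norm ((4*pi*c*Ast c n T*CC1 c0) * exp (- bb c0 * norm x))"
      using a b h0 by (simp only: real_norm_def abs_of_nonneg)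
  qed
qed

lemma nu_upper_fixed:
  assumes c0: "0 < c0" "c0 < 1" and c: "1 \<le> c" and n: "c0 \<le> n" "n \<le> 1/c0" and T: "c0 \<le> T" "T \<le> 1/c0"
    and u: "norm u \<le> 1/c0" and int: "integrable lborel (\<lambda>t. indicator {0..} t * Kf (c\<^sup>2/T) t)"
  shows "nu c n u T p \<le> (4*pi*(exp 1/(4*pi*c0^3))*CC1 c0*(I0 c0 + I1 c0)) * min c (1 + norm p)"
proof -
  have cp: "0 < c" using c by linarith
  have Tp: "0 < T" using c0 T by linarith
  have n0: "0 \<le> n" using n c0 by linarith
  define A where "A = Ast c n T"
  have A0: "0 \<le> A" using Ast_nonneg[OF n0 Tp] cp by (simp add: A_def)
  have A2: "A \<le> exp 1/(4*pi*c0^3)" using Ast_upper[OF c0 c n0 n(2) T int] by (simp add: A_def)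
  have C10: "0 < CC1 c0" by (simp add: CC1_def)
  have I00: "0 \<le> I0 c0" unfolding I0_def by (rule Bochner_Integration.integral_nonneg) simp
  have I10: "0 \<le> I1 c0" unfolding I1_def by (rule Bochner_Integration.integral_nonneg) simp
  define X0 where "X0 = 4*pi*A*CC1 c0"
  define Y0 where "Y0 = 4*pi*(exp 1/(4*pi*c0^3))*CC1 c0"
  have X0: "0 \<le> X0" using A0 C10 by (simp add: X0_def)
  have XY: "X0 \<le> Y0" unfolding X0_def Y0_def
    by (rule mult_right_mono[OF mult_left_mono[OF A2]]) (use C10 in auto)
  have i0: "integrable lborel (\<lambda>q::real^3. exp (- bb c0 * norm q))" by (rule int0[OF c0(1)])
  have i1: "integrable lborel (\<lambda>q::real^3. norm q * exp (- bb c0 * norm q))" by (rule int1[OF c0(1)])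
  have up1: "nu c n u T p \<le> X0 * (c * I0 c0)"
  proof -
    have "nu c n u T p \<le> integral\<^sup>L lborel (\<lambda>q::real^3. (4*pi*c*A*CC1 c0) * exp (- bb c0 * norm q))"
      unfolding nu_def
    proof (rule Bochner_Integration.integral_mono')
      show "integrable lborel (\<lambda>q::real^3. (4*pi*c*A*CC1 c0) * exp (- bb c0 * norm q))"
        by (rule integrable_mult_right[OF i0])
      fix q
      show "4 * pi * v_phi c p q * maxwellian c n u T q \<le> (4*pi*c*A*CC1 c0) * exp (- bb c0 * norm q)"
        using f_le_h0(1)[OF c0(1) c n0 T u] by (simp add: A_def)
      show "0 \<le> (4*pi*c*A*CC1 c0) * exp (- bb c0 * norm q)" using A0 C10 cp by simp
    qed
    also have "\<dots> = X0 * (c * I0 c0)" by (simp add: I0_def X0_def ac_simps)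
    finally show ?thesis .
  qed
  have up2: "nu c n u T p \<le> X0 * ((norm p/2) * I0 c0 + (1/2) * I1 c0)"
  proof -
    have "nu c n u T p \<le> integral\<^sup>L lborel (\<lambda>q::real^3. X0 * ((norm p/2) * exp (- bb c0 * norm q) + (1/2) * (norm q * exp (- bb c0 * norm q))))"
      unfolding nu_def
    proof (rule Bochner_Integration.integral_mono')
      show "integrable lborel (\<lambda>q::real^3. X0 * ((norm p/2) * exp (- bb c0 * norm q) + (1/2) * (norm q * exp (- bb c0 * norm q))))"
        by (intro integrable_mult_right Bochner_Integration.integrable_add i0 i1)
      fix q :: "real^3"
      show "4 * pi * v_phi c p q * maxwellian c n u T q \<le> X0 * ((norm p/2) * exp (- bb c0 * norm q) + (1/2) * (norm q * exp (- bb c0 * norm q)))"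
        using f_le_h0(2)[OF c0(1) c n0 T u] by (simp add: A_def X0_def)
      show "0 \<le> X0 * ((norm p/2) * exp (- bb c0 * norm q) + (1/2) * (norm q * exp (- bb c0 * norm q)))"
        using X0 by simp
    qed
    also have "\<dots> = X0 * ((norm p/2) * I0 c0 + (1/2) * I1 c0)"
      using i0 i1 by (simp add: I0_def I1_def)
    finally show ?thesis .
  qed
  show ?thesis
  proof (cases "c \<le> 1 + norm p")
    case True
    have "X0 * (c * I0 c0) \<le> Y0 * (c * (I0 c0 + I1 c0))"
      by (rule mult_mono[OF XY]) (use cp I00 I10 X0 XY in \<open>auto intro!: mult_left_mono\<close>)
    then show ?thesis using up1 True by (simp add: Y0_def ac_simps)
  next
    case False
    have "(norm p/2) * I0 c0 + (1/2) * I1 c0 \<le> (1 + norm p) * (I0 c0 + I1 c0)"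
    proof -
      have "(norm p/2) * I0 c0 \<le> (1 + norm p) * I0 c0" by (rule mult_right_mono) (use I00 in auto)
      moreover have "(1/2) * I1 c0 \<le> (1 + norm p) * I1 c0" by (rule mult_right_mono) (use I10 in auto)
      ultimately show ?thesis by (simp add: distrib_left)
    qed
    then have "X0 * ((norm p/2) * I0 c0 + (1/2) * I1 c0) \<le> Y0 * ((1 + norm p) * (I0 c0 + I1 c0))"
      by (rule mult_mono[OF XY]) (use I00 I10 X0 XY in auto)
    then show ?thesis using up2 False by (simp add: Y0_def ac_simps)
  qed
qed



definition A1 :: "real \<Rightarrow> real" where "A1 c0 = c0^3 / (4*pi*(6*(1+4/c0)\<^sup>2))"
definition Elo :: "real \<Rightarrow> real" where "Elo c0 = exp (-(1/c0 + 5)\<^sup>2/(2*c0))"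
definition zz :: "real^3" where "zz = 4 *\<^sub>R axis 1 1"
definition vol :: real where "vol = min (measure lborel (ball (0::real^3) 1)) (measure lborel (ball zz 1))"
definition a0 :: "real \<Rightarrow> real" where "a0 c0 = 4*pi*A1 c0 * Elo c0 * vol / 9216"

lemma vol_pos: "0 < vol"
  using content_ball_pos[of 1 "0::real^3"] content_ball_pos[of 1 zz] by (simp add: vol_def)

lemma a0_pos: "0 < c0 \<Longrightarrow> 0 < a0 c0"
proof -
  assume c0: "0 < c0"
  have "0 < 1 + 4/c0" using c0 by (simp add: add_pos_pos)
  then have "0 < A1 c0" using c0 by (simp add: A1_def)
  then show ?thesis using vol_pos by (simp add: a0_def Elo_def)
qed

lemma nu_lower_fixed:
  assumes c0: "0 < c0" "c0 < 1" and c: "1 \<le> c" and n: "c0 \<le> n" "n \<le> 1/c0" and T: "c0 \<le> T" "T \<le> 1/c0"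
    and u: "norm u \<le> 1/c0" and int: "integrable lborel (\<lambda>t. indicator {0..} t * Kf (c\<^sup>2/T) t)"
  shows "a0 c0 * min c (1 + norm p) \<le> nu c n u T p"
proof -
  have cp: "0 < c" using c by linarith
  have Tp: "0 < T" using c0 T by linarith
  have n0: "0 \<le> n" using n c0 by linarith
  define m where "m = min c (1 + norm p)"
  have m0: "0 \<le> m" using cp by (simp add: m_def)
  define Bp where "Bp = (if 2 \<le> norm p then ball (0::real^3) 1 else ball zz 1)"
  have Bp_facts: "norm q \<le> 5 \<and> (1 + norm p)/4 \<le> \<bar>norm p - norm q\<bar>" if q: "q \<in> Bp" for q
  proof (cases "2 \<le> norm p")
    case True
    then have "norm q < 1" using q by (simp add: Bp_def)
    then show ?thesis using True by auto
  next
    case False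
    then have d: "dist zz q < 1" using q by (simp add: Bp_def)
    have nz: "norm zz = 4" by (simp add: zz_def)
    have "norm zz \<le> norm q + dist zz q" using norm_triangle_sub[of zz q] by (simp add: dist_norm)
    moreover have "norm q \<le> norm zz + dist zz q" using norm_triangle_ineq3[of q zz] by (simp add: dist_norm norm_minus_commute)
    ultimately show ?thesis using d nz False by auto
  qed
  have Bp_sets: "Bp \<in> sets lborel" by (simp add: Bp_def)
  have Bp_fin: "emeasure lborel Bp < \<infinity>" unfolding Bp_def
    using emeasure_bounded_finite[OF bounded_ball, of "0::real^3" 1] emeasure_bounded_finite[OF bounded_ball, of zz 1]
    by simp
  have Bp_vol: "vol \<le> measure lborel Bp" by (simp add: Bp_def vol_def)
  define L where "L = 4*pi*(m/9216)*(A1 c0 * Elo c0)"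
  have A1le: "A1 c0 \<le> Ast c n T" using Ast_lower[OF c0 c n(1) T int] by (simp add: A1_def)
  have A10: "0 \<le> A1 c0" using c0 by (simp add: A1_def)
  have L0: "0 \<le> L" using A10 m0 by (simp add: L_def Elo_def)
  have pw: "indicator Bp q * L \<le> 4 * pi * v_phi c p q * maxwellian c n u T q" for q
  proof (cases "q \<in> Bp")
    case False
    then show ?thesis using f_le_h0(3)[OF c0(1) c n0 T u] by simp
  next
    case True
    from Bp_facts[OF True] have q5: "norm q \<le> 5" and d: "(1 + norm p)/4 \<le> \<bar>norm p - norm q\<bar>" by auto
    have v: "m/9216 \<le> v_phi c p q" using v_lower[OF c q5 d] by (simp add: m_def)
    have "Elo c0 \<le> exp (-(1/c0 + norm q)\<^sup>2/(2*T))"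
    proof -
      have sq: "(1/c0 + norm q)\<^sup>2 \<le> (1/c0 + 5)\<^sup>2" using q5 c0 by (intro power_mono) auto
      have "(1/c0 + norm q)\<^sup>2/(2*T) \<le> (1/c0 + 5)\<^sup>2/(2*c0)"
        by (rule frac_le[OF _ sq]) (use c0 T in auto)
      then show ?thesis by (simp add: Elo_def)
    qed
    also have "\<dots> \<le> Es c u T q" by (rule Es_lower[OF c Tp u])
    finally have E: "Elo c0 \<le> Es c u T q" .
    have "A1 c0 * Elo c0 \<le> Ast c n T * Es c u T q"
      by (rule mult_mono[OF A1le E]) (use A10 Ast_nonneg[OF n0 Tp] cp in \<open>auto simp: Elo_def\<close>)
    then have "(m/9216) * (A1 c0 * Elo c0) \<le> v_phi c p q * (Ast c n T * Es c u T q)"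
      by (rule mult_mono[OF v]) (use v_sq(1)[OF cp] A10 in \<open>auto simp: Elo_def\<close>)
    then have "L \<le> 4 * pi * (v_phi c p q * (Ast c n T * Es c u T q))"
      unfolding L_def by (simp add: mult.assoc)
    then show ?thesis using True by (simp add: f_eq)
  qed
  have "(\<integral>q. indicator Bp q * L \<partial>lborel) \<le> nu c n u T p"
    unfolding nu_def
  proof (rule Bochner_Integration.integral_mono)
    show "integrable lborel (\<lambda>q::real^3. indicator Bp q * L)"
      by (rule integrable_mult_left) (rule integrable_real_indicator[OF Bp_sets Bp_fin])
    show "integrable lborel (\<lambda>q. 4 * pi * v_phi c p q * maxwellian c n u T q)"
      by (rule nu_integrable[OF c0(1) c n0 T u])
    show "\<And>q. indicator Bp q * L \<le> 4 * pi * v_phi c p q * maxwellian c n u T q" by (rule pw)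
  qed
  moreover have "(\<integral>q. indicator Bp q * L \<partial>lborel) = measure lborel Bp * L"
    by (simp add: integral_mult_left_zero)
  moreover have "vol * L \<le> measure lborel Bp * L" by (rule mult_right_mono[OF Bp_vol L0])
  moreover have "a0 c0 * m = vol * L" by (simp add: a0_def L_def)
  ultimately show ?thesis by (simp add: m_def)
qed



theorem lemma2p5:
  fixes c0 :: real
  assumes "0 < c0" and "c0 < 1"
  shows "\<exists>C>0. \<forall>c n T :: real. \<forall>u :: real^3. \<forall>p q p' q' :: real^3.
           c \<ge> 1 \<longrightarrow> c0 \<le> n \<longrightarrow> n \<le> 1 / c0 \<longrightarrow> c0 \<le> T \<longrightarrow> T \<le> 1 / c0
           \<longrightarrow> norm u \<le> 1 / c0
           \<longrightarrow> pzero c p + pzero c q = pzero c p' + pzero c q'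
           \<longrightarrow> p + q = p' + q'
           \<longrightarrow> nu c n u T p \<le> C * nu c n u T p' * nu c n u T q'
             \<and> nu c n u T q \<le> C * nu c n u T p' * nu c n u T q'"
proof -
  have c0: "0 < c0" "c0 < 1" using assms by auto
  define B where "B = 4*pi*(exp 1/(4*pi*c0^3))*CC1 c0*(I0 c0 + I1 c0)"
  define a where "a = a0 c0"
  have a: "0 < a" using a0_pos[OF c0(1)] by (simp add: a_def)
  have I00: "0 \<le> I0 c0" unfolding I0_def by (rule Bochner_Integration.integral_nonneg) simp
  have I10: "0 \<le> I1 c0" unfolding I1_def by (rule Bochner_Integration.integral_nonneg) simp
  have B0: "0 \<le> B" using c0 I00 I10 by (simp add: B_def CC1_def)
  define C where "C = 2*B/a\<^sup>2 + 1"
  have C0: "0 < C" using B0 a by (simp add: C_def add_nonneg_pos)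
  have main: "nu c n u T x \<le> C * nu c n u T p' * nu c n u T q'"
    if c: "1 \<le> c" and n: "c0 \<le> n" "n \<le> 1/c0" and T: "c0 \<le> T" "T \<le> 1/c0" and u: "norm u \<le> 1/c0"
      and E: "pzero c x + pzero c y = pzero c p' + pzero c q'" for c n T u x y p' q'
  proof (cases "integrable lborel (\<lambda>t. indicator {0..} t * Kf (c\<^sup>2/T) t)")
    case False
    then show ?thesis by (simp add: nonint_zero)
  next
    case int: True
    have up: "nu c n u T x \<le> B * min c (1 + norm x)"
      using nu_upper_fixed[OF c0 c n T u int] by (simp add: B_def)
    have lp: "a * min c (1 + norm p') \<le> nu c n u T p'" using nu_lower_fixed[OF c0 c n T u int] by (simp add: a_def)
    have lq: "a * min c (1 + norm q') \<le> nu c n u T q'" using nu_lower_fixed[OF c0 c n T u int] by (simp add: a_def)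
    have m0: "0 \<le> min c (1 + norm p')" "0 \<le> min c (1 + norm q')" using c by auto
    have cm: "min c (1 + norm x) \<le> 2 * (min c (1 + norm p') * min c (1 + norm q'))"
      by (rule comb_m[OF c E])
    have "nu c n u T x \<le> B * (2 * (min c (1 + norm p') * min c (1 + norm q')))"
      using up mult_left_mono[OF cm B0] by linarith
    also have "\<dots> = (2*B/a\<^sup>2) * ((a * min c (1 + norm p')) * (a * min c (1 + norm q')))"
      using a by (simp add: field_simps power2_eq_square)
    also have "\<dots> \<le> (2*B/a\<^sup>2) * (nu c n u T p' * nu c n u T q')"
    proof (rule mult_left_mono)
      show "(a * min c (1 + norm p')) * (a * min c (1 + norm q')) \<le> nu c n u T p' * nu c n u T q'"
      proof (rule mult_mono[OF lp lq])
        have "0 \<le> a * min c (1 + norm p')" "0 \<le> a * min c (1 + norm q')" using a m0 by auto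
        then show "0 \<le> nu c n u T p'" "0 \<le> a * min c (1 + norm q')" using lp by linarith+
      qed
      show "0 \<le> 2*B/a\<^sup>2" using B0 by simp
    qed
    also have "\<dots> \<le> C * (nu c n u T p' * nu c n u T q')"
    proof (rule mult_right_mono)
      show "2*B/a\<^sup>2 \<le> C" by (simp add: C_def)
      have "0 \<le> a * min c (1 + norm p')" "0 \<le> a * min c (1 + norm q')" using a m0 by auto
      then show "0 \<le> nu c n u T p' * nu c n u T q'" using lp lq by simp
    qed
    finally show ?thesis by (simp add: mult.assoc)
  qed
  show ?thesis
  proof (intro exI[of _ C] conjI allI impI C0)
    fix c n T :: real and u p q p' q' :: "real^3"
    assume h: "1 \<le> c" "c0 \<le> n" "n \<le> 1/c0" "c0 \<le> T" "T \<le> 1/c0" "norm u \<le> 1/c0"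
      "pzero c p + pzero c q = pzero c p' + pzero c q'" "p + q = p' + q'"
    show "nu c n u T p \<le> C * nu c n u T p' * nu c n u T q'"
      by (rule main[OF h(1-6) h(7)])
    have "pzero c q + pzero c p = pzero c p' + pzero c q'" using h(7) by simp
    then show "nu c n u T q \<le> C * nu c n u T p' * nu c n u T q'"
      by (rule main[OF h(1-6)])
  qed
qed

end
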